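(* For $I\subseteq\mathbb{N}$ and unitaries $u=(u(i))_{i\in\mathbb{N}}$, $v=(v(i))_{i\in\mathbb{N}}$ of $\ell^\infty(M_m(\mathbb{C}))$, let $\Delta_I(u,v)=\sup_{i,j\in I}\|u(i)u(j)^*-v(i)v(j)^*\|$. Then for all $I\subseteq\mathbb{N}$ and all such $u,v$: (1) $\Delta_I(u,v)\le 2\sup_{i\in I}\|u(i)-v(i)\|$; (2) $\Delta_I(u,v)\ge\sup_{j\in I}\|u(j)-v(j)\|-\inf_{i\in I}\|u(i)-v(i)\|$; in particular, if $u(k)=v(k)$ for some $k\in I$, then $\Delta_I(u,v)\ge\sup_{j\in I}\|u(j)-v(j)\|$; (3) if $w$ is a unitary in $M_m(\mathbb{C})$, then $\Delta_I(u,v)=\Delta_I(u,vw)$, where $(vw)(i)=v(i)w$; (4) if $J\subseteq\mathbb{N}$ and $I\cap J\neq\emptyset$, then $\Delta_{I\cup J}(u,v)\le\Delta_I(u,v)+\Delta_J(u,v)$; (5) $\inf_{w}\sup_{i\in I}\|u(i)-v(i)w\|\le\Delta_I(u,v)\le 2\inf_{w}\sup_{i\in I}\|u(i)-v(i)w\|$, where $w$ ranges over the unitary group of $M_m(\mathbb{C})$.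
   Context: $m\ge1$; $\ell^\infty(M_m(\mathbb{C}))$ is the $\mathrm{C}^*$-algebra of norm-bounded sequences of $m\times m$ complex matrices, so a unitary $u$ of it is a sequence $(u(i))_{i\in\mathbb{N}}$ of unitary matrices; norms are operator norms on $M_m(\mathbb{C})$. *)

theory Defs
  imports "HOL-Analysis.Analysis"
begin

text \<open>m x m complex matrices are modelled as complex^'n^'n for a finite type 'n
  with CARD('n) = m (so m >= 1 automatically).\<close>

definition cadj :: "complex^'n^'n \<Rightarrow> complex^'n^'n" where
  "cadj A = (\<chi> i j. cnj (A $ j $ i))"

definition unitary_mat :: "complex^'n::finite^'n \<Rightarrow> bool" where
  "unitary_mat A \<longleftrightarrow> A ** cadj A = mat 1 \<and> cadj A ** A = mat 1"

definition opnorm :: "complex^'n::finite^'n \<Rightarrow> real" where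
  "opnorm A = onorm (\<lambda>x::complex^'n. A *v x)"

definition Delta :: "nat set \<Rightarrow> (nat \<Rightarrow> complex^'n::finite^'n) \<Rightarrow> (nat \<Rightarrow> complex^'n^'n) \<Rightarrow> ereal" where
  "Delta I u v = (SUP i\<in>I. SUP j\<in>I. ereal (opnorm (u i ** cadj (u j) - v i ** cadj (v j))))"

end

theory Submission imports Defs begin

definition hf :: "complex^'n::finite \<Rightarrow> complex^'n \<Rightarrow> complex" where
  "hf x y = (\<Sum>i\<in>UNIV. cnj (x$i) * y$i)"

lemma hf_adj: "hf (A *v x) y = hf x (cadj A *v y)"
proof -
  have "hf (A *v x) y = (\<Sum>i\<in>UNIV. \<Sum>j\<in>UNIV. cnj (A$i$j) * cnj (x$j) * y$i)"
    by (simp add: hf_def matrix_vector_mult_def sum_distrib_right)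
  also have "\<dots> = (\<Sum>j\<in>UNIV. \<Sum>i\<in>UNIV. cnj (A$i$j) * cnj (x$j) * y$i)"
    by (rule sum.swap)
  also have "\<dots> = hf x (cadj A *v y)"
    by (simp add: hf_def matrix_vector_mult_def cadj_def sum_distrib_left mult_ac)
  finally show ?thesis .
qed

lemma norm_hf: "complex_of_real ((norm x)^2) = hf x x"
proof -
  have "(norm x)^2 = (\<Sum>i\<in>UNIV. (norm (x$i))^2)"
    by (simp add: norm_vec_def L2_set_def sum_nonneg)
  hence "complex_of_real ((norm x)^2) = (\<Sum>i\<in>UNIV. complex_of_real ((norm (x$i))^2))"
    by simp
  also have "\<dots> = hf x x" unfolding hf_def complex_norm_square
    by (simp add: mult.commute)
  finally show ?thesis .
qed

lemma unitary_isometry: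
  assumes "unitary_mat U" shows "norm (U *v x) = norm x"
proof -
  have "hf (U *v x) (U *v x) = hf x x"
    using assms by (simp add: hf_adj matrix_vector_mul_assoc unitary_mat_def)
  hence "complex_of_real ((norm (U *v x))^2) = complex_of_real ((norm x)^2)"
    by (simp only: norm_hf)
  hence "(norm (U *v x))^2 = (norm x)^2" using of_real_eq_iff by blast
  thus ?thesis by (simp add: power2_eq_iff_nonneg)
qed

lemma opnorm_left:
  assumes "unitary_mat U" shows "opnorm (U ** A) = opnorm A"
  unfolding opnorm_def onorm_def
  by (simp add: matrix_vector_mul_assoc[symmetric] unitary_isometry[OF assms])

lemma opnorm_right:
  assumes "unitary_mat U" shows "opnorm (A ** U) = opnorm A"
proof -
  have s: "range (\<lambda>x. U *v x) = UNIV"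
  proof -
    have "y = U *v (cadj U *v y)" for y
      using assms by (simp add: matrix_vector_mul_assoc unitary_mat_def)
    thus ?thesis by blast
  qed
  have "(SUP x. norm ((A ** U) *v x) / norm x) = (SUP x. norm (A *v (U *v x)) / norm (U *v x))"
    by (simp add: matrix_vector_mul_assoc[symmetric] unitary_isometry[OF assms])
  also have "\<dots> = (SUP y\<in>range (\<lambda>x. U *v x). norm (A *v y) / norm y)"
    by (simp add: image_comp)
  also have "\<dots> = (SUP y. norm (A *v y) / norm y)" using s by simp
  finally show ?thesis unfolding opnorm_def onorm_def .
qed

lemma opnorm_nonneg: "0 \<le> opnorm A"
  unfolding opnorm_def by (rule onorm_pos_le) simp

lemma opnorm_add: "opnorm (A + B) \<le> opnorm A + opnorm B"
proof -
  have e: "(\<lambda>x. (A + B) *v x) = (\<lambda>x. A *v x + B *v x)"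
    by (rule ext) (simp add: matrix_vector_mult_add_rdistrib)
  show ?thesis unfolding opnorm_def e
    by (rule onorm_triangle) simp_all
qed

lemma opnorm_neg: "opnorm (- A) = opnorm A"
proof -
  have "(- A) *v x = - (A *v x)" for x
    by (simp add: vec_eq_iff matrix_vector_mult_def sum_negf)
  hence e: "(\<lambda>x. (- A) *v x) = (\<lambda>x. - (A *v x))" by (rule ext)
  show ?thesis unfolding opnorm_def e by (rule onorm_neg)
qed

lemma opnorm_commute: "opnorm (A - B) = opnorm (B - A)"
  using opnorm_neg[of "A - B"] by simp

lemma opnorm_diff: "opnorm (A - B) \<le> opnorm A + opnorm B"
  using opnorm_add[of A "- B"] opnorm_neg[of B] by simp

lemma mat_sub_ldistrib: "A ** (B - C) = A ** B - A ** (C::complex^'n::finite^'n)"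
  by (simp add: vec_eq_iff matrix_matrix_mult_def sum_subtractf right_diff_distrib)

lemma mat_sub_rdistrib: "(B - C) ** A = B ** A - C ** (A::complex^'n::finite^'n)"
  by (simp add: vec_eq_iff matrix_matrix_mult_def sum_subtractf left_diff_distrib)

lemma cadj_mult: "cadj (A ** B) = cadj B ** cadj (A::complex^'n::finite^'n)"
  by (simp add: vec_eq_iff matrix_matrix_mult_def cadj_def mult.commute)

lemma cadj_cadj: "cadj (cadj A) = A"
  by (simp add: vec_eq_iff cadj_def)

lemma unitary_cadj: "unitary_mat A \<Longrightarrow> unitary_mat (cadj A)"
  by (simp add: unitary_mat_def cadj_cadj)

lemma unitary_mult: "unitary_mat A \<Longrightarrow> unitary_mat B \<Longrightarrow> unitary_mat (A ** (B::complex^'n::finite^'n))"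
  unfolding unitary_mat_def cadj_mult
  by (metis matrix_mul_assoc matrix_mul_rid)

lemma cadj_one: "cadj (mat 1 :: complex^'n::finite^'n) = mat 1"
  by (simp add: vec_eq_iff cadj_def mat_def)

lemma unitary_one: "unitary_mat (mat 1 :: complex^'n::finite^'n)"
  by (simp add: unitary_mat_def cadj_one)


lemma P1:
  assumes ui: "unitary_mat ui" and uj: "unitary_mat uj" and vi: "unitary_mat vi" and vj: "unitary_mat vj"
  shows "opnorm (ui ** cadj uj - vi ** cadj vj) \<le> opnorm (ui - vi) + opnorm (uj - vj)"
proof -
  let ?X = "ui ** cadj uj - vi ** cadj vj"
  have e: "?X ** vj = ui ** (cadj uj ** vj - mat 1) + (ui - vi)"
    using vj by (simp add: mat_sub_rdistrib mat_sub_ldistrib matrix_mul_assoc[symmetric] unitary_mat_def)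
  have e2: "uj ** (cadj uj ** vj - mat 1) = vj - uj"
    using uj by (simp add: mat_sub_ldistrib matrix_mul_assoc unitary_mat_def)
  have "opnorm ?X = opnorm (?X ** vj)" using opnorm_right[OF vj] by simp
  also have "\<dots> \<le> opnorm (ui ** (cadj uj ** vj - mat 1)) + opnorm (ui - vi)"
    unfolding e by (rule opnorm_add)
  also have "opnorm (ui ** (cadj uj ** vj - mat 1)) = opnorm (uj - vj)"
    using opnorm_left[OF ui] opnorm_left[OF uj, of "cadj uj ** vj - mat 1"] e2 opnorm_commute
    by metis
  finally show ?thesis by simp
qed

lemma P2:
  assumes ui: "unitary_mat ui" and uj: "unitary_mat uj" and vi: "unitary_mat vi" and vj: "unitary_mat vj"
  shows "opnorm (uj - vj) \<le> opnorm (uj ** cadj ui - vj ** cadj vi) + opnorm (ui - vi)"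
proof -
  have e: "uj - vj = (uj ** cadj ui - vj ** cadj vi) ** ui + vj ** (cadj vi ** ui - mat 1)"
    using ui by (simp add: mat_sub_rdistrib mat_sub_ldistrib matrix_mul_assoc[symmetric] unitary_mat_def)
  have e2: "vi ** (cadj vi ** ui - mat 1) = ui - vi"
    using vi by (simp add: mat_sub_ldistrib matrix_mul_assoc unitary_mat_def)
  have "opnorm (uj - vj) \<le> opnorm ((uj ** cadj ui - vj ** cadj vi) ** ui) + opnorm (vj ** (cadj vi ** ui - mat 1))"
    unfolding e by (rule opnorm_add)
  also have "opnorm ((uj ** cadj ui - vj ** cadj vi) ** ui) = opnorm (uj ** cadj ui - vj ** cadj vi)"
    by (rule opnorm_right[OF ui])
  also have "opnorm (vj ** (cadj vi ** ui - mat 1)) = opnorm (ui - vi)"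
    using opnorm_left[OF vj] opnorm_left[OF vi, of "cadj vi ** ui - mat 1"] e2 by metis
  finally show ?thesis .
qed

lemma P3:
  assumes ui: "unitary_mat ui" and uj: "unitary_mat uj" and vi: "unitary_mat vi" and vj: "unitary_mat vj"
    and uk: "unitary_mat uk" and vk: "unitary_mat vk"
  shows "opnorm (ui ** cadj uj - vi ** cadj vj) \<le> opnorm (ui ** cadj uk - vi ** cadj vk) + opnorm (uk ** cadj uj - vk ** cadj vj)"
proof -
  have e: "ui ** cadj uj - vi ** cadj vj = (ui ** cadj uk - vi ** cadj vk) ** (uk ** cadj uj) + (vi ** cadj vk) ** (uk ** cadj uj - vk ** cadj vj)"
    using uk vk by (simp add: mat_sub_rdistrib mat_sub_ldistrib matrix_mul_assoc unitary_mat_def)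
      (simp add: matrix_mul_assoc[symmetric])
  have "opnorm (ui ** cadj uj - vi ** cadj vj) \<le> opnorm ((ui ** cadj uk - vi ** cadj vk) ** (uk ** cadj uj)) + opnorm ((vi ** cadj vk) ** (uk ** cadj uj - vk ** cadj vj))"
    unfolding e by (rule opnorm_add)
  also have "opnorm ((ui ** cadj uk - vi ** cadj vk) ** (uk ** cadj uj)) = opnorm (ui ** cadj uk - vi ** cadj vk)"
    by (rule opnorm_right[OF unitary_mult[OF uk unitary_cadj[OF uj]]])
  also have "opnorm ((vi ** cadj vk) ** (uk ** cadj uj - vk ** cadj vj)) = opnorm (uk ** cadj uj - vk ** cadj vj)"
    by (rule opnorm_left[OF unitary_mult[OF vi unitary_cadj[OF vk]]])
  finally show ?thesis .
qed

lemma P4: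
  assumes "unitary_mat w"
  shows "vi ** w ** cadj (vj ** w) = vi ** cadj (vj::complex^'n::finite^'n)"
  using assms by (simp add: cadj_mult matrix_mul_assoc unitary_mat_def)
    (simp add: matrix_mul_assoc[symmetric] unitary_mat_def)

lemma P5:
  assumes uk: "unitary_mat uk"
  shows "opnorm (ui - vi ** (cadj vk ** uk)) = opnorm (ui ** cadj uk - vi ** cadj vk)"
proof -
  have "ui - vi ** (cadj vk ** uk) = (ui ** cadj uk - vi ** cadj vk) ** uk"
    using uk by (simp add: mat_sub_rdistrib matrix_mul_assoc[symmetric] unitary_mat_def)
  thus ?thesis using opnorm_right[OF uk] by simp
qed

lemma ereal_2_INF:
  fixes x :: ereal
  assumes "\<And>w. w \<in> W \<Longrightarrow> x \<le> 2 * f w"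
  shows "x \<le> 2 * (INF w\<in>W. f w)"
proof (cases x)
  case (real r)
  have "ereal (r/2) \<le> f w" if "w \<in> W" for w
    using assms[OF that] real by (cases "f w") auto
  hence "ereal (r/2) \<le> (INF w\<in>W. f w)" by (rule INF_greatest)
  hence "2 * ereal (r/2) \<le> 2 * (INF w\<in>W. f w)" by (rule ereal_mult_left_mono) simp
  thus ?thesis using real by simp
next
  case PInf
  have "f w = \<infinity>" if "w \<in> W" for w
    using assms[OF that] PInf by (cases "f w") auto
  hence "\<infinity> \<le> (INF w\<in>W. f w)" by (intro INF_greatest) simp
  hence "(INF w\<in>W. f w) = \<infinity>" by simp
  thus ?thesis by simp
next
  case MInf thus ?thesis by simp
qed


lemma Delta_upper:
  "i \<in> I \<Longrightarrow> j \<in> I \<Longrightarrow> ereal (opnorm (u i ** cadj (u j) - v i ** cadj (v j))) \<le> Delta I u v"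
  unfolding Delta_def by (intro SUP_upper2[of i] SUP_upper2[of j]) auto

lemma Delta_least:
  "(\<And>i j. i \<in> I \<Longrightarrow> j \<in> I \<Longrightarrow> ereal (opnorm (u i ** cadj (u j) - v i ** cadj (v j))) \<le> z) \<Longrightarrow> Delta I u v \<le> z"
  unfolding Delta_def by (intro SUP_least) auto

lemma Delta_nonneg: "k \<in> I \<Longrightarrow> 0 \<le> Delta I u v"
  using Delta_upper[of k I k u v] opnorm_nonneg[of "u k ** cadj (u k) - v k ** cadj (v k)"]
  by (metis ereal_less_eq(5) order_trans)

lemma ereal_two: "(2::ereal) * x = x + x"
  by (cases x) auto

lemma part1:
  fixes u v :: "nat \<Rightarrow> complex^'n::finite^'n"
  assumes U: "\<And>i. unitary_mat (u i)" and V: "\<And>i. unitary_mat (v i)"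
  shows "Delta I u v \<le> 2 * (SUP i\<in>I. ereal (opnorm (u i - v i)))"
proof (rule Delta_least)
  fix i j assume ij: "i \<in> I" "j \<in> I"
  have "ereal (opnorm (u i ** cadj (u j) - v i ** cadj (v j))) \<le> ereal (opnorm (u i - v i)) + ereal (opnorm (u j - v j))"
    using P1[OF U U V V] by simp
  also have "\<dots> \<le> (SUP i\<in>I. ereal (opnorm (u i - v i))) + (SUP i\<in>I. ereal (opnorm (u i - v i)))"
    using ij by (intro add_mono SUP_upper) auto
  finally show "ereal (opnorm (u i ** cadj (u j) - v i ** cadj (v j))) \<le> 2 * (SUP i\<in>I. ereal (opnorm (u i - v i)))"
    by (simp only: ereal_two)
qed

lemma part3:
  assumes "unitary_mat w"
  shows "Delta I u v = Delta I u (\<lambda>i. v i ** w)"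
  unfolding Delta_def by (simp only: P4[OF assms])

lemma part2:
  fixes u v :: "nat \<Rightarrow> complex^'n::finite^'n"
  assumes U: "\<And>i. unitary_mat (u i)" and V: "\<And>i. unitary_mat (v i)"
  shows "Delta I u v \<ge> (SUP j\<in>I. ereal (opnorm (u j - v j))) - (INF i\<in>I. ereal (opnorm (u i - v i)))"
proof (cases "I = {}")
  case True thus ?thesis by (simp add: Delta_def bot_ereal_def top_ereal_def)
next
  case False
  then obtain k where k: "k \<in> I" by auto
  let ?S = "(SUP j\<in>I. ereal (opnorm (u j - v j)))"
  let ?N = "(INF i\<in>I. ereal (opnorm (u i - v i)))"
  have D0: "0 \<le> Delta I u v" by (rule Delta_nonneg[OF k])
  have "?S \<le> Delta I u v + ereal (opnorm (u i - v i))" if i: "i \<in> I" for i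
  proof (rule SUP_least)
    fix j assume j: "j \<in> I"
    have "ereal (opnorm (u j - v j)) \<le> ereal (opnorm (u j ** cadj (u i) - v j ** cadj (v i))) + ereal (opnorm (u i - v i))"
      using P2[OF U U V V] by simp
    also have "\<dots> \<le> Delta I u v + ereal (opnorm (u i - v i))"
      using i j by (intro add_right_mono Delta_upper)
    finally show "ereal (opnorm (u j - v j)) \<le> Delta I u v + ereal (opnorm (u i - v i))" .
  qed
  hence "?S \<le> (INF i\<in>I. Delta I u v + ereal (opnorm (u i - v i)))" by (intro INF_greatest)
  also have "\<dots> = Delta I u v + ?N"
    using False D0 by (intro INF_ereal_add_right) (auto simp: opnorm_nonneg)
  finally have 1: "?S \<le> Delta I u v + ?N" .
  have "0 \<le> ?N" by (intro INF_greatest) (simp add: opnorm_nonneg)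
  moreover have "?N \<le> ereal (opnorm (u k - v k))" using k by (intro INF_lower)
  ultimately have "\<bar>?N\<bar> \<noteq> \<infinity>" by auto
  thus ?thesis using 1 by (simp add: ereal_minus_le)
qed

lemma part2b:
  fixes u v :: "nat \<Rightarrow> complex^'n::finite^'n"
  assumes U: "\<And>i. unitary_mat (u i)" and V: "\<And>i. unitary_mat (v i)"
    and k: "k \<in> I" and eq: "u k = v k"
  shows "Delta I u v \<ge> (SUP j\<in>I. ereal (opnorm (u j - v j)))"
proof (rule SUP_least)
  fix j assume j: "j \<in> I"
  have "opnorm (u j - v j) \<le> opnorm (u j ** cadj (u k) - v j ** cadj (v k)) + opnorm (u k - v k)"
    using P2[OF U U V V] by simp
  also have "opnorm (u k - v k) = 0" using eq by (simp add: opnorm_def onorm_zero)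
  finally have "ereal (opnorm (u j - v j)) \<le> ereal (opnorm (u j ** cadj (u k) - v j ** cadj (v k)))" by simp
  also have "\<dots> \<le> Delta I u v" using j k by (rule Delta_upper)
  finally show "ereal (opnorm (u j - v j)) \<le> Delta I u v" .
qed

lemma part4:
  fixes u v :: "nat \<Rightarrow> complex^'n::finite^'n"
  assumes U: "\<And>i. unitary_mat (u i)" and V: "\<And>i. unitary_mat (v i)"
    and IJ: "I \<inter> J \<noteq> {}"
  shows "Delta (I \<union> J) u v \<le> Delta I u v + Delta J u v"
proof -
  from IJ obtain k where kI: "k \<in> I" and kJ: "k \<in> J" by auto
  have DI: "0 \<le> Delta I u v" and DJ: "0 \<le> Delta J u v" using Delta_nonneg kI kJ by auto
  show ?thesis
  proof (rule Delta_least)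
    fix i j assume i: "i \<in> I \<union> J" and j: "j \<in> I \<union> J"
    let ?d = "\<lambda>i j. ereal (opnorm (u i ** cadj (u j) - v i ** cadj (v j)))"
    have tri: "?d i j \<le> ?d i k + ?d k j"
      using P3[OF U[of i] U[of j] V[of i] V[of j] U[of k] V[of k]] by simp
    show "?d i j \<le> Delta I u v + Delta J u v"
    proof -
      consider "i \<in> I" "j \<in> I" | "i \<in> J" "j \<in> J" | "i \<in> I" "j \<in> J" | "i \<in> J" "j \<in> I"
        using i j by auto
      thus ?thesis
      proof cases
        case 1
        have "?d i j \<le> Delta I u v" using 1 by (rule Delta_upper)
        thus ?thesis using DJ by (metis add_increasing2)
      next
        case 2
        have "?d i j \<le> Delta J u v" using 2 by (rule Delta_upper)
        thus ?thesis using DI by (metis add_increasing)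
      next
        case 3
        have "?d i k + ?d k j \<le> Delta I u v + Delta J u v"
          using 3 kI kJ by (intro add_mono Delta_upper)
        with tri show ?thesis by (rule order_trans)
      next
        case 4
        have "?d i k + ?d k j \<le> Delta J u v + Delta I u v"
          using 4 kI kJ by (intro add_mono Delta_upper)
        with tri have "?d i j \<le> Delta J u v + Delta I u v" by (rule order_trans)
        thus ?thesis by (simp only: add.commute)
      qed
    qed
  qed
qed

lemma part5a:
  fixes u v :: "nat \<Rightarrow> complex^'n::finite^'n"
  assumes U: "\<And>i. unitary_mat (u i)" and V: "\<And>i. unitary_mat (v i)"
  shows "(INF w\<in>{w. unitary_mat w}. SUP i\<in>I. ereal (opnorm (u i - v i ** w))) \<le> Delta I u v"
proof (cases "I = {}")
  case True
  have "(INF w\<in>{w. unitary_mat w}. SUP i\<in>I. ereal (opnorm (u i - v i ** w))) \<le> (SUP i\<in>I. ereal (opnorm (u i - v i ** mat 1)))"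
    by (rule INF_lower) (simp add: unitary_one)
  thus ?thesis using True by (simp add: Delta_def)
next
  case False
  then obtain k where k: "k \<in> I" by auto
  have "(INF w\<in>{w. unitary_mat w}. SUP i\<in>I. ereal (opnorm (u i - v i ** w))) \<le> (SUP i\<in>I. ereal (opnorm (u i - v i ** (cadj (v k) ** u k))))"
    by (rule INF_lower) (simp add: unitary_mult unitary_cadj U V)
  also have "\<dots> \<le> Delta I u v"
  proof (rule SUP_least)
    fix i assume i: "i \<in> I"
    show "ereal (opnorm (u i - v i ** (cadj (v k) ** u k))) \<le> Delta I u v"
      unfolding P5[OF U] using i k by (rule Delta_upper)
  qed
  finally show ?thesis .
qed

lemma part5b:
  fixes u v :: "nat \<Rightarrow> complex^'n::finite^'n"
  assumes U: "\<And>i. unitary_mat (u i)" and V: "\<And>i. unitary_mat (v i)"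
  shows "Delta I u v \<le> 2 * (INF w\<in>{w. unitary_mat w}. SUP i\<in>I. ereal (opnorm (u i - v i ** w)))"
proof (rule ereal_2_INF)
  fix w :: "complex^'n^'n" assume w: "w \<in> {w. unitary_mat w}"
  hence "Delta I u v = Delta I u (\<lambda>i. v i ** w)" by (intro part3) simp
  also have "\<dots> \<le> 2 * (SUP i\<in>I. ereal (opnorm (u i - v i ** w)))"
    using w by (intro part1 U unitary_mult V) simp
  finally show "Delta I u v \<le> 2 * (SUP i\<in>I. ereal (opnorm (u i - v i ** w)))" .
qed

theorem lemma4p2:
  fixes I :: "nat set" and u v :: "nat \<Rightarrow> complex^'n::finite^'n"
  assumes "\<And>i. unitary_mat (u i)" and "\<And>i. unitary_mat (v i)"
  shows
    "Delta I u v \<le> 2 * (SUP i\<in>I. ereal (opnorm (u i - v i)))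
   \<and> Delta I u v \<ge> (SUP j\<in>I. ereal (opnorm (u j - v j))) - (INF i\<in>I. ereal (opnorm (u i - v i)))
   \<and> ((\<exists>k\<in>I. u k = v k) \<longrightarrow> Delta I u v \<ge> (SUP j\<in>I. ereal (opnorm (u j - v j))))
   \<and> (\<forall>w. unitary_mat w \<longrightarrow> Delta I u v = Delta I u (\<lambda>i. v i ** w))
   \<and> (\<forall>J. I \<inter> J \<noteq> {} \<longrightarrow> Delta (I \<union> J) u v \<le> Delta I u v + Delta J u v)
   \<and> (INF w\<in>{w. unitary_mat w}. SUP i\<in>I. ereal (opnorm (u i - v i ** w))) \<le> Delta I u v
   \<and> Delta I u v \<le> 2 * (INF w\<in>{w. unitary_mat w}. SUP i\<in>I. ereal (opnorm (u i - v i ** w)))"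
proof (intro conjI allI impI)
  show "Delta I u v \<le> 2 * (SUP i\<in>I. ereal (opnorm (u i - v i)))" by (rule part1[OF assms])
  show "Delta I u v \<ge> (SUP j\<in>I. ereal (opnorm (u j - v j))) - (INF i\<in>I. ereal (opnorm (u i - v i)))"
    by (rule part2[OF assms])
  show "Delta I u v \<ge> (SUP j\<in>I. ereal (opnorm (u j - v j)))" if "\<exists>k\<in>I. u k = v k"
  proof -
    from that obtain k where "k \<in> I" "u k = v k" by blast
    thus ?thesis by (rule part2b[OF assms])
  qed
  show "Delta I u v = Delta I u (\<lambda>i. v i ** w)" if "unitary_mat w" for w :: "complex^'n^'n"
    using that by (rule part3)
  show "Delta (I \<union> J) u v \<le> Delta I u v + Delta J u v" if "I \<inter> J \<noteq> {}" for J
    using that by (rule part4[OF assms])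
  show "(INF w\<in>{w. unitary_mat w}. SUP i\<in>I. ereal (opnorm (u i - v i ** w))) \<le> Delta I u v"
    by (rule part5a[OF assms])
  show "Delta I u v \<le> 2 * (INF w\<in>{w. unitary_mat w}. SUP i\<in>I. ereal (opnorm (u i - v i ** w)))"
    by (rule part5b[OF assms])
qed

end
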